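(* Under the model below, for all times $t\ge 0$ and every user $k$, $$\hat Q_k(t) - Q_k(t) \le 2M-1,$$ where $Q_k(t)$ and $\hat Q_k(t)$ are the queue lengths of user $k$ at time $t$, measured in packets, under GPS and MPGPS respectively.
   Context: Model. There are $K$ users (sessions) with separate FIFO queues, and $N$ servers (subcarriers), each transmitting $r$ bits per unit time, so the total service rate is $Nr$. All packets have the same length $L$ bits. Transmissions are error free. The same packet arrival sequence is fed to two systems, starting empty at time $0$. GPS (generalized processor sharing): a fluid system of total rate $Nr$; each user $k$ has a weight $\phi_k>0$, and at every instant each backlogged user $k$ is served at rate $Nr\,\phi_k/\sum_{j\in B}\phi_j$, where $B$ is the set of currently backlogged users. MPGPS (multi-server packetized GPS) with parameter $M\ge 1$: it is work conserving (servers are never idle while packets are queued). Whenever the servers become idle at a time $\tau$, among all packets queued at $\tau$ it selects the $\min\big(M,\sum_{k}\hat Q_k(\tau)\big)$ packets that would be the first to complete service in the corresponding GPS system if no further packets arrived after $\tau$. These selected packets form one batch; a batch of $M_h$ packets is transmitted jointly over all $N$ servers at aggregate rate $Nr$, occupying the servers for $M_hL/(Nr)$ time units. *)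

theory Defs
  imports "HOL-Analysis.Analysis"
begin

text \<open>The arrival process is given by counting
functions: A k t = number of packets of user k that have arrived in [0,t].
Packets of user k are indexed 0,1,2,... in FIFO (arrival) order.\<close>

definition valid_arrivals :: "nat \<Rightarrow> (nat \<Rightarrow> real \<Rightarrow> nat) \<Rightarrow> bool" where
  "valid_arrivals K A \<longleftrightarrow>
     (\<forall>k<K. mono (A k) \<and> (\<forall>t<0. A k t = 0) \<and>
        (\<forall>t. \<exists>e>0. \<forall>s. t \<le> s \<and> s < t + e \<longrightarrow> A k s = A k t))"

text \<open>GPS fluid system: S k t = cumulative number of bits of user k served by time t.\<close>

definition gps_backlogged ::
  "nat \<Rightarrow> real \<Rightarrow> (nat \<Rightarrow> real \<Rightarrow> nat) \<Rightarrow> (nat \<Rightarrow> real \<Rightarrow> real) \<Rightarrow> real \<Rightarrow> nat set" where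
  "gps_backlogged K L A S s = {j. j < K \<and> S j s < L * real (A j s)}"

definition gps_rate ::
  "nat \<Rightarrow> nat \<Rightarrow> real \<Rightarrow> (nat \<Rightarrow> real) \<Rightarrow> real \<Rightarrow> (nat \<Rightarrow> real \<Rightarrow> nat) \<Rightarrow>
   (nat \<Rightarrow> real \<Rightarrow> real) \<Rightarrow> nat \<Rightarrow> real \<Rightarrow> real" where
  "gps_rate K N r \<phi> L A S k s =
     (if k \<in> gps_backlogged K L A S s
      then real N * r * \<phi> k / (\<Sum>j\<in>gps_backlogged K L A S s. \<phi> j)
      else 0)"

definition is_gps ::
  "nat \<Rightarrow> nat \<Rightarrow> real \<Rightarrow> (nat \<Rightarrow> real) \<Rightarrow> real \<Rightarrow> (nat \<Rightarrow> real \<Rightarrow> nat) \<Rightarrow>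
   (nat \<Rightarrow> real \<Rightarrow> real) \<Rightarrow> bool" where
  "is_gps K N r \<phi> L A S \<longleftrightarrow>
     (\<forall>k<K. \<forall>t\<ge>0. (gps_rate K N r \<phi> L A S k has_integral S k t) {0..t})"

definition truncate_arrivals :: "(nat \<Rightarrow> real \<Rightarrow> nat) \<Rightarrow> real \<Rightarrow> nat \<Rightarrow> real \<Rightarrow> nat" where
  "truncate_arrivals A \<tau> = (\<lambda>k t. A k (min t \<tau>))"

definition gps_finish :: "real \<Rightarrow> (nat \<Rightarrow> real \<Rightarrow> real) \<Rightarrow> nat \<Rightarrow> nat \<Rightarrow> real" where
  "gps_finish L S k j = Inf {t. 0 \<le> t \<and> real (Suc j) * L \<le> S k t}"

definition gps_queue ::
  "real \<Rightarrow> (nat \<Rightarrow> real \<Rightarrow> nat) \<Rightarrow> (nat \<Rightarrow> real \<Rightarrow> real) \<Rightarrow> nat \<Rightarrow> real \<Rightarrow> int" where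
  "gps_queue L A S k t = int (A k t) - \<lfloor>S k t / L\<rfloor>"

text \<open>MPGPS schedule: batch h starts at time tau h and contains b h k packets of
user k (the head-of-line packets of user k's FIFO queue).\<close>

definition served_before :: "(nat \<Rightarrow> nat \<Rightarrow> nat) \<Rightarrow> nat \<Rightarrow> nat \<Rightarrow> nat" where
  "served_before b h k = (\<Sum>i<h. b i k)"

definition batch_end ::
  "nat \<Rightarrow> nat \<Rightarrow> real \<Rightarrow> real \<Rightarrow> (nat \<Rightarrow> real) \<Rightarrow> (nat \<Rightarrow> nat \<Rightarrow> nat) \<Rightarrow> nat \<Rightarrow> real" where
  "batch_end K N r L \<tau> b h = \<tau> h + real (\<Sum>k<K. b h k) * L / (real N * r)"

definition is_mpgps ::
  "nat \<Rightarrow> nat \<Rightarrow> real \<Rightarrow> (nat \<Rightarrow> real) \<Rightarrow> real \<Rightarrow> nat \<Rightarrow> (nat \<Rightarrow> real \<Rightarrow> nat) \<Rightarrow>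
   (nat \<Rightarrow> real) \<Rightarrow> (nat \<Rightarrow> nat \<Rightarrow> nat) \<Rightarrow> bool" where
  "is_mpgps K N r \<phi> L M A \<tau> b \<longleftrightarrow>
     \<tau> 0 = 0 \<and> filterlim \<tau> at_top sequentially \<and>
     (\<forall>h.
        (\<forall>k<K. served_before b h k \<le> A k (\<tau> h) \<and>
               b h k \<le> A k (\<tau> h) - served_before b h k) \<and>
        (\<Sum>k<K. b h k) = min M (\<Sum>k<K. A k (\<tau> h) - served_before b h k) \<and>
        batch_end K N r L \<tau> b h \<le> \<tau> (Suc h) \<and>
        (\<forall>t. batch_end K N r L \<tau> b h \<le> t \<and> t < \<tau> (Suc h) \<longrightarrow>
             (\<forall>k<K. A k t \<le> served_before b (Suc h) k)) \<and>
        (\<forall>S'. is_gps K N r \<phi> L (truncate_arrivals A (\<tau> h)) S' \<longrightarrow>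
             (\<forall>k<K. \<forall>j. \<forall>k'<K. \<forall>j'.
                served_before b h k \<le> j \<and> j < served_before b h k + b h k \<and>
                served_before b h k' + b h k' \<le> j' \<and> j' < A k' (\<tau> h) \<longrightarrow>
                gps_finish L S' k j \<le> gps_finish L S' k' j')))"

text \<open>MPGPS queue length of user k at time t, in packets: a packet leaves the
queue when the transmission of its batch is complete.\<close>
definition mpgps_queue ::
  "nat \<Rightarrow> nat \<Rightarrow> real \<Rightarrow> real \<Rightarrow> (nat \<Rightarrow> real \<Rightarrow> nat) \<Rightarrow> (nat \<Rightarrow> real) \<Rightarrow>
   (nat \<Rightarrow> nat \<Rightarrow> nat) \<Rightarrow> nat \<Rightarrow> real \<Rightarrow> int" where
  "mpgps_queue K N r L A \<tau> b k t =
     int (A k t) - int (\<Sum>h\<in>{h. batch_end K N r L \<tau> b h \<le> t}. b h k)"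

end

theory Submission
  imports Defs
begin


locale gpsys =
  fixes K N :: nat and r L :: real and \<phi> :: "nat \<Rightarrow> real"
    and A :: "nat \<Rightarrow> real \<Rightarrow> nat" and S :: "nat \<Rightarrow> real \<Rightarrow> real"
  assumes N1: "N \<ge> 1" and rpos: "r > 0" and Lpos: "L > 0"
    and phipos: "\<And>j. j < K \<Longrightarrow> \<phi> j > 0"
    and monoA: "\<And>k. k < K \<Longrightarrow> mono (A k)"
    and isg: "is_gps K N r \<phi> L A S"
begin

abbreviation "C \<equiv> real N * r"
abbreviation "rt k \<equiv> gps_rate K N r \<phi> L A S k"
abbreviation "BL s \<equiv> gps_backlogged K L A S s"

lemma Cpos: "C > 0" using N1 rpos by simp

lemma BL_sub: "BL s \<subseteq> {..<K}" by (auto simp: gps_backlogged_def)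
lemma BL_fin: "finite (BL s)" using BL_sub finite_subset by blast

lemma sumphi_pos: "k \<in> BL s \<Longrightarrow> (\<Sum>j\<in>BL s. \<phi> j) > 0"
proof -
  assume k: "k \<in> BL s"
  have "\<forall>i\<in>BL s. 0 \<le> \<phi> i" using BL_sub phipos by (force intro: less_imp_le)
  then show ?thesis
    using sum_pos2[of "BL s" k \<phi>] BL_fin k BL_sub phipos by blast
qed

lemma rt_nonneg: "rt k s \<ge> 0"
proof (cases "k \<in> BL s")
  case True
  then have "k < K" using BL_sub by auto
  then show ?thesis using sumphi_pos[OF True] Cpos phipos[of k] True
    by (auto simp: gps_rate_def intro!: divide_nonneg_pos)
qed (simp add: gps_rate_def)

lemma rt_sum: "(\<Sum>k<K. rt k s) \<le> C"
proof -
  have "(\<Sum>k<K. rt k s) = (\<Sum>k\<in>BL s. rt k s)"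
    by (rule sum.mono_neutral_right) (use BL_sub in \<open>auto simp: gps_rate_def\<close>)
  also have "\<dots> = (\<Sum>k\<in>BL s. C * \<phi> k / (\<Sum>j\<in>BL s. \<phi> j))"
    by (simp add: gps_rate_def)
  also have "\<dots> = C * (\<Sum>k\<in>BL s. \<phi> k) / (\<Sum>j\<in>BL s. \<phi> j)"
    by (simp add: sum_divide_distrib[symmetric] sum_distrib_left)
  also have "\<dots> \<le> C"
  proof (cases "BL s = {}")
    case True then show ?thesis using Cpos by simp
  next
    case False then obtain k where "k \<in> BL s" by auto
    then show ?thesis using sumphi_pos[of k s] by simp
  qed
  finally show ?thesis .
qed

lemma rt_le: "k < K \<Longrightarrow> rt k s \<le> C"
proof -
  assume k: "k < K"
  have "rt k s \<le> (\<Sum>k<K. rt k s)"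
    by (rule member_le_sum) (use k rt_nonneg in auto)
  then show ?thesis using rt_sum[of s] by linarith
qed

lemma hasint: "k < K \<Longrightarrow> t \<ge> 0 \<Longrightarrow> (rt k has_integral S k t) {0..t}"
  using isg by (auto simp: is_gps_def)

lemma intble: "k < K \<Longrightarrow> t \<ge> 0 \<Longrightarrow> rt k integrable_on {0..t}"
  using hasint by blast

lemma S_eq: "k < K \<Longrightarrow> t \<ge> 0 \<Longrightarrow> S k t = integral {0..t} (rt k)"
  by (metis hasint integral_unique)

lemma S0: "k < K \<Longrightarrow> S k 0 = 0"
  using S_eq[of k 0] by simp

lemma S_diff: assumes "k < K" "0 \<le> s" "s \<le> t"
  shows "(rt k has_integral (S k t - S k s)) {s..t}"
proof -
  have i: "rt k integrable_on {s..t}"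
    by (rule integrable_subinterval_real[OF intble[of k t]]) (use assms in auto)
  have "integral {0..s} (rt k) + integral {s..t} (rt k) = integral {0..t} (rt k)"
    using Henstock_Kurzweil_Integration.integral_combine[where f="rt k" and a=0 and c=s and b=t] intble[of k t] assms by auto
  then have "integral {s..t} (rt k) = S k t - S k s"
    using S_eq[of k s] S_eq[of k t] assms by auto
  then show ?thesis using i by (metis integrable_integral)
qed

lemma S_mono: assumes "k < K" "0 \<le> s" "s \<le> t" shows "S k s \<le> S k t"
proof -
  have "0 \<le> S k t - S k s"
    using has_integral_le[OF has_integral_0 S_diff[OF assms]] rt_nonneg by auto
  then show ?thesis by simp
qed

lemma S_nonneg: "k < K \<Longrightarrow> 0 \<le> t \<Longrightarrow> 0 \<le> S k t"
  using S_mono[of k 0 t] S0 by simp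

lemma S_work: assumes "0 \<le> s" "s \<le> t"
  shows "(\<Sum>k<K. S k t - S k s) \<le> C * (t - s)"
proof -
  have "((\<lambda>x. \<Sum>k<K. rt k x) has_integral (\<Sum>k<K. S k t - S k s)) {s..t}"
    by (rule has_integral_sum) (use S_diff assms in auto)
  moreover have "((\<lambda>x. C) has_integral C * (t - s)) {s..t}"
    using has_integral_const_real[of C s t] assms by (simp add: mult.commute)
  ultimately show ?thesis
    by (rule has_integral_le) (use rt_sum in auto)
qed

lemma S_work1: assumes "k < K" "0 \<le> s" "s \<le> t"
  shows "S k t - S k s \<le> C * (t - s)"
proof -
  have "S k t - S k s \<le> (\<Sum>k<K. S k t - S k s)"
    by (rule member_le_sum) (use assms S_mono in auto)
  then show ?thesis using S_work assms(2,3) by fastforce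
qed

lemma S_cont: assumes "k < K" "0 \<le> t" shows "continuous_on {0..t} (S k)"
proof -
  have "continuous_on {0..t} (\<lambda>x. integral {0..x} (rt k))"
    by (rule indefinite_integral_continuous_1) (use intble assms in auto)
  then show ?thesis
    by (rule continuous_on_cong[THEN iffD1, rotated 2]) (use S_eq assms in auto)
qed

lemma S_le_LA: assumes k: "k < K" and t: "0 \<le> t" shows "S k t \<le> L * real (A k t)"
proof (rule ccontr)
  assume "\<not> ?thesis"
  then have lt: "L * real (A k t) < S k t" by simp
  have "L * real (A k t) \<ge> 0" using Lpos by simp
  then obtain s1 where s1: "0 \<le> s1" "s1 \<le> t" "S k s1 = L * real (A k t)"
    using IVT'[of "S k" 0 "L * real (A k t)" t] S0[OF k] lt t S_cont[OF k t] by auto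
  have z: "rt k x = 0" if "x \<in> {s1..t}" for x
  proof -
    have "S k x \<ge> S k s1" using S_mono[of k s1 x] that s1 k by auto
    moreover have "A k x \<le> A k t" using monoA[OF k] that by (auto dest: monoD)
    then have "L * real (A k x) \<le> L * real (A k t)" using Lpos by simp
    ultimately have "k \<notin> BL x" using s1 by (auto simp: gps_backlogged_def)
    then show ?thesis by (simp add: gps_rate_def)
  qed
  have "(rt k has_integral 0) {s1..t}" by (rule has_integral_is_0) (use z in auto)
  then have "S k t - S k s1 = 0" using S_diff[OF k s1(1,2)] has_integral_unique by blast
  then show False using lt s1 by simp
qed

lemma fair:
  assumes a: "a < K" and b: "b < K" and s0: "0 \<le> s0" "s0 \<le> T"
    and bl: "\<And>x. x \<in> {s0..T} \<Longrightarrow> a \<in> BL x"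
  shows "(S b T - S b s0) / \<phi> b \<le> (S a T - S a s0) / \<phi> a"
proof -
  have ib: "((\<lambda>x. rt b x / \<phi> b) has_integral (S b T - S b s0) / \<phi> b) {s0..T}"
    by (rule has_integral_divide) (rule S_diff[OF b s0])
  have ia: "((\<lambda>x. rt a x / \<phi> a) has_integral (S a T - S a s0) / \<phi> a) {s0..T}"
    by (rule has_integral_divide) (rule S_diff[OF a s0])
  show ?thesis
  proof (rule has_integral_le[OF ib ia])
    fix x assume x: "x \<in> {s0..T}"
    have ax: "a \<in> BL x" using bl[OF x] .
    have sp: "(\<Sum>j\<in>BL x. \<phi> j) > 0" by (rule sumphi_pos[OF ax])
    have ra: "rt a x / \<phi> a = C / (\<Sum>j\<in>BL x. \<phi> j)"
      using ax phipos[OF a] by (simp add: gps_rate_def)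
    have "rt b x / \<phi> b \<le> C / (\<Sum>j\<in>BL x. \<phi> j)"
    proof (cases "b \<in> BL x")
      case True then show ?thesis using phipos[OF b] by (simp add: gps_rate_def)
    next
      case False then show ?thesis using sp Cpos by (simp add: gps_rate_def)
    qed
    then show "rt b x / \<phi> b \<le> rt a x / \<phi> a" using ra by simp
  qed
qed

end


locale gptr = gpsys +
  fixes \<tau>0 :: real
  assumes tau0: "\<tau>0 \<ge> 0"
begin

definition "R k = L * real (A k \<tau>0) - S k \<tau>0"
definition "th k = R k / \<phi> k"
definition "U v = (\<Sum>j<K. min (\<phi> j * v) (R j)) / C"
definition "thx = Max (insert 0 (th ` {..<K}))"
definition "Ut = U thx"
definition "V u = the_inv_into {0..thx} U (min (max u 0) Ut)"

lemma R_nonneg: "k < K \<Longrightarrow> R k \<ge> 0"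
  using S_le_LA[of k \<tau>0] tau0 by (simp add: R_def)

lemma th_nonneg: "k < K \<Longrightarrow> th k \<ge> 0"
  using R_nonneg[of k] phipos[of k] by (simp add: th_def)

lemma th_le: "k < K \<Longrightarrow> th k \<le> thx"
  unfolding thx_def by (rule Max_ge) auto

lemma thx_nonneg: "thx \<ge> 0"
  unfolding thx_def by (rule Max_ge) auto

lemma thx_cases: "thx = 0 \<or> (\<exists>j<K. thx = th j)"
proof -
  have "thx \<in> insert 0 (th ` {..<K})" unfolding thx_def by (rule Max_in) auto
  then show ?thesis by auto
qed

lemma phiv_lt: "j < K \<Longrightarrow> (\<phi> j * v < R j) \<longleftrightarrow> v < th j"
  using phipos[of j] by (simp add: th_def pos_less_divide_eq mult.commute)

lemma phiv_le: "j < K \<Longrightarrow> (\<phi> j * v \<le> R j) \<longleftrightarrow> v \<le> th j"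
  using phipos[of j] by (simp add: th_def pos_le_divide_eq mult.commute)

lemma term_mono: "j < K \<Longrightarrow> v \<le> v' \<Longrightarrow> min (\<phi> j * v) (R j) \<le> min (\<phi> j * v') (R j)"
proof -
  assume "j < K" "v \<le> v'"
  then have "\<phi> j * v \<le> \<phi> j * v'" using phipos[of j] by (intro mult_left_mono) auto
  then show ?thesis by auto
qed

lemma U_mono: "v \<le> v' \<Longrightarrow> U v \<le> U v'"
  unfolding U_def using Cpos
  by (intro divide_right_mono sum_mono term_mono) (use Cpos in auto)

lemma U0: "U 0 = 0"
  unfolding U_def using R_nonneg by (simp add: min_def)

lemma U_strict: assumes "0 \<le> v" "v < v'" "v' \<le> thx" shows "U v < U v'"
proof -
  have "thx \<noteq> 0" using assms by auto
  then obtain j where j: "j < K" "thx = th j" using thx_cases by auto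
  have "(\<Sum>j<K. min (\<phi> j * v) (R j)) < (\<Sum>j<K. min (\<phi> j * v') (R j))"
  proof (rule sum_strict_mono_ex1)
    show "\<forall>x\<in>{..<K}. min (\<phi> x * v) (R x) \<le> min (\<phi> x * v') (R x)"
    proof
      fix x assume "x \<in> {..<K}"
      then show "min (\<phi> x * v) (R x) \<le> min (\<phi> x * v') (R x)"
        by (intro term_mono) (use assms in auto)
    qed
    have "\<phi> j * v < R j" using phiv_lt[OF j(1)] assms j by simp
    moreover have "\<phi> j * v' \<le> R j" using phiv_le[OF j(1)] assms j by simp
    moreover have "\<phi> j * v < \<phi> j * v'" using phipos[OF j(1)] assms by simp
    ultimately show "\<exists>a\<in>{..<K}. min (\<phi> a * v) (R a) < min (\<phi> a * v') (R a)"
      using j by (intro bexI[of _ j]) auto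
  qed simp
  then show ?thesis unfolding U_def using Cpos by (simp add: divide_strict_right_mono)
qed

lemma U_cont: "continuous_on UNIV U"
  unfolding U_def using N1 rpos by (intro continuous_intros) auto

lemma inj_U: "inj_on U {0..thx}"
proof (rule inj_onI)
  fix x y assume "x \<in> {0..thx}" "y \<in> {0..thx}" "U x = U y"
  then show "x = y" using U_strict[of x y] U_strict[of y x]
    by (cases x y rule: linorder_cases) auto
qed

lemma U_img: "U ` {0..thx} = {0..Ut}"
proof
  show "U ` {0..thx} \<subseteq> {0..Ut}"
  proof (rule image_subsetI)
    fix x assume "x \<in> {0..thx}"
    then show "U x \<in> {0..Ut}" using U_mono[of 0 x] U_mono[of x thx] U0 unfolding Ut_def by auto
  qed
next
  show "{0..Ut} \<subseteq> U ` {0..thx}"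
  proof
    fix y assume "y \<in> {0..Ut}"
    then obtain x where "0 \<le> x" "x \<le> thx" "U x = y"
      using IVT'[of U 0 y thx] U0 thx_nonneg continuous_on_subset[OF U_cont]
      unfolding Ut_def by auto
    then show "y \<in> U ` {0..thx}" by auto
  qed
qed

lemma clamp_in: "min (max u 0) Ut \<in> U ` {0..thx}"
  using U_img U0 U_mono[OF thx_nonneg] unfolding Ut_def by auto

lemma V_in: "V u \<in> {0..thx}"
  unfolding V_def by (rule the_inv_into_into[OF inj_U clamp_in]) auto

lemma UV: "U (V u) = min (max u 0) Ut"
  unfolding V_def by (rule f_the_inv_into_f[OF inj_U clamp_in])

lemma VU: "v \<in> {0..thx} \<Longrightarrow> V (U v) = v"
proof -
  assume v: "v \<in> {0..thx}"
  have "U v \<in> {0..Ut}" using v U_img by auto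
  then have "min (max (U v) 0) Ut = U v" by auto
  then show ?thesis unfolding V_def using the_inv_into_f_f[OF inj_U v] by simp
qed

lemma V0: "V 0 = 0"
  using VU[of 0] U0 thx_nonneg by simp

lemma V_cont: "continuous_on UNIV V"
proof -
  have c1: "continuous_on {0..Ut} (the_inv_into {0..thx} U)"
    using continuous_on_inv[of "{0..thx}" U "the_inv_into {0..thx} U"]
      continuous_on_subset[OF U_cont] the_inv_into_f_f[OF inj_U] U_img by auto
  have c2: "continuous_on UNIV (\<lambda>u. min (max u 0) Ut)" by (intro continuous_intros)
  have "Ut \<ge> 0" using U0 U_mono[OF thx_nonneg] Ut_def by simp
  then have "(\<lambda>u. min (max u 0) Ut) ` UNIV \<subseteq> {0..Ut}" by auto
  then show ?thesis unfolding V_def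
    using continuous_on_compose2[OF c1 c2] by auto
qed

lemma V_ge: assumes v: "v \<in> {0..thx}" shows "v \<le> V u \<longleftrightarrow> U v \<le> min (max u 0) Ut"
proof
  assume "v \<le> V u" then show "U v \<le> min (max u 0) Ut" using U_mono UV by metis
next
  assume h: "U v \<le> min (max u 0) Ut"
  show "v \<le> V u"
  proof (rule ccontr)
    assume "\<not> v \<le> V u"
    then have "U (V u) < U v" using U_strict[of "V u" v] V_in[of u] v by auto
    then show False using h UV by simp
  qed
qed

end


context gptr begin

lemma dterm:
  assumes j: "j < K" and v: "v \<noteq> th j"
  shows "((\<lambda>x. min (\<phi> j * x) (R j)) has_field_derivative (if v < th j then \<phi> j else 0)) (at v)"
proof (cases "v < th j")
  case True
  have d: "((\<lambda>x. \<phi> j * x) has_field_derivative \<phi> j) (at v)"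
    by (auto intro!: derivative_eq_intros)
  show ?thesis using True
    by (auto intro!: has_field_derivative_transform_within_open[OF d, of "{..<th j}"]
        simp: phiv_lt[OF j] min_def less_imp_le phiv_le[OF j])
next
  case False
  then have vt: "th j < v" using v by simp
  have d: "((\<lambda>x. R j) has_field_derivative 0) (at v)"
    by (auto intro!: derivative_eq_intros)
  show ?thesis using False
    apply simp
    apply (rule has_field_derivative_transform_within_open[OF d, of "{th j<..}"])
    using vt by (auto simp: min_def phiv_le[OF j])
qed

lemma dU:
  assumes v: "v \<notin> th ` {..<K}"
  shows "(U has_field_derivative (\<Sum>j\<in>{j\<in>{..<K}. v < th j}. \<phi> j) / C) (at v)"
proof -
  have "((\<lambda>x. \<Sum>j<K. min (\<phi> j * x) (R j)) has_field_derivative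
          (\<Sum>j<K. if v < th j then \<phi> j else 0)) (at v)"
  proof (rule DERIV_sum)
    fix n assume n: "n \<in> {..<K}"
    show "((\<lambda>x. min (\<phi> n * x) (R n)) has_field_derivative (if v < th n then \<phi> n else 0)) (at v)"
      by (rule dterm) (use v n in auto)
  qed
  then have "((\<lambda>x. (\<Sum>j<K. min (\<phi> j * x) (R j)) / C) has_field_derivative
          (\<Sum>j<K. if v < th j then \<phi> j else 0) / C) (at v)"
    by (rule DERIV_cdivide)
  moreover have "(\<Sum>j<K. if v < th j then \<phi> j else 0) = (\<Sum>j\<in>{j\<in>{..<K}. v < th j}. \<phi> j)"
    using sum.inter_filter[of "{..<K}" \<phi> "\<lambda>j. v < th j"] by simp
  ultimately show ?thesis unfolding U_def[abs_def] by simp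
qed

lemma V_cont_at: "isCont V u"
  using V_cont continuous_on_eq_continuous_at by blast

lemma Ut_nonneg: "Ut \<ge> 0"
  using U0 U_mono[OF thx_nonneg] Ut_def by simp

lemma dV:
  assumes u: "0 < u" "u < Ut" and vn: "V u \<notin> th ` {..<K}"
  shows "(V has_field_derivative C / (\<Sum>j\<in>{j\<in>{..<K}. V u < th j}. \<phi> j)) (at u)"
proof -
  let ?P = "{j\<in>{..<K}. V u < th j}"
  have Uv: "U (V u) = u" using UV[of u] u by simp
  have "V u \<noteq> thx" using Uv u Ut_def by auto
  then have lt: "V u < thx" using V_in[of u] by auto
  then have "thx \<noteq> 0" using V_in[of u] by auto
  then obtain j0 where j0: "j0 < K" "thx = th j0" using thx_cases by auto
  have "j0 \<in> ?P" using j0 lt by auto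
  moreover have "finite ?P" by simp
  moreover have "\<forall>j\<in>?P. 0 \<le> \<phi> j" using phipos by (auto intro: less_imp_le)
  ultimately have sp: "(\<Sum>j\<in>?P. \<phi> j) > 0"
    using sum_pos2[of ?P j0 \<phi>] phipos[OF j0(1)] by blast
  have "(V has_field_derivative inverse ((\<Sum>j\<in>?P. \<phi> j) / C)) (at u)"
  proof (rule DERIV_inverse_function[where f=U and a=0 and b=Ut])
    show "(U has_field_derivative (\<Sum>j\<in>?P. \<phi> j) / C) (at (V u))" by (rule dU[OF vn])
    show "(\<Sum>j\<in>?P. \<phi> j) / C \<noteq> 0" using sp Cpos N1 rpos by simp
    show "0 < u" "u < Ut" using u by auto
    show "\<And>y. 0 < y \<Longrightarrow> y < Ut \<Longrightarrow> U (V y) = y" using UV by simp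
    show "isCont V u" by (rule V_cont_at)
  qed
  then show ?thesis by simp
qed

definition "Sp k s = (if s \<le> \<tau>0 then S k s else S k \<tau>0 + min (R k) (\<phi> k * V (s - \<tau>0)))"
abbreviation "At \<equiv> truncate_arrivals A \<tau>0"
abbreviation "rtp k \<equiv> gps_rate K N r \<phi> L At Sp k"
abbreviation "BLp s \<equiv> gps_backlogged K L At Sp s"

lemma BLp_after: assumes s: "s > \<tau>0" shows "BLp s = {j\<in>{..<K}. V (s - \<tau>0) < th j}"
proof -
  have "j \<in> BLp s \<longleftrightarrow> j \<in> {j\<in>{..<K}. V (s - \<tau>0) < th j}" for j
  proof (cases "j < K")
    case True
    have "j \<in> BLp s \<longleftrightarrow> S j \<tau>0 + min (R j) (\<phi> j * V (s - \<tau>0)) < L * real (A j \<tau>0)"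
      using s True by (simp add: gps_backlogged_def Sp_def truncate_arrivals_def)
    also have "\<dots> \<longleftrightarrow> min (R j) (\<phi> j * V (s - \<tau>0)) < R j" by (auto simp: R_def)
    also have "\<dots> \<longleftrightarrow> \<phi> j * V (s - \<tau>0) < R j" by auto
    also have "\<dots> \<longleftrightarrow> V (s - \<tau>0) < th j" by (rule phiv_lt[OF True])
    finally show ?thesis using True by simp
  qed (auto simp: gps_backlogged_def)
  then show ?thesis by blast
qed

lemma BLp_before: "s \<le> \<tau>0 \<Longrightarrow> BLp s = BL s"
  by (auto simp: gps_backlogged_def Sp_def truncate_arrivals_def)

lemma rtp_before: "s \<le> \<tau>0 \<Longrightarrow> rtp k s = rt k s"
  using BLp_before[of s] by (simp add: gps_rate_def)

lemma Vs_cont: "continuous_on UNIV (\<lambda>x. V (x - \<tau>0))"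
  by (rule continuous_on_compose2[OF V_cont]) (auto intro!: continuous_intros)

lemma V_big: "y \<ge> Ut \<Longrightarrow> V y = thx"
proof -
  assume "y \<ge> Ut"
  then have "min (max y 0) Ut = U thx" using Ut_nonneg Ut_def by auto
  then show ?thesis using the_inv_into_f_f[OF inj_U, of thx] thx_nonneg unfolding V_def by simp
qed

lemma deriv_Sp:
  assumes k: "k < K" and s: "s > \<tau>0" and n1: "s - \<tau>0 \<noteq> Ut"
    and n2: "\<And>j. j < K \<Longrightarrow> s - \<tau>0 \<noteq> U (th j)"
  shows "(Sp k has_field_derivative rtp k s) (at s)"
proof (cases "s - \<tau>0 > Ut")
  case True
  have d: "((\<lambda>x. S k \<tau>0 + R k) has_field_derivative 0) (at s)"
    by (auto intro!: derivative_eq_intros)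
  have "BLp s = {}" using BLp_after[OF s] V_big[of "s - \<tau>0"] True th_le by force
  then have r0: "rtp k s = 0" by (simp add: gps_rate_def)
  have "(Sp k has_field_derivative 0) (at s)"
  proof (rule has_field_derivative_transform_within_open[OF d, of "{\<tau>0 + Ut<..}"])
    show "s \<in> {\<tau>0 + Ut<..}" using True by simp
    fix x assume x: "x \<in> {\<tau>0 + Ut<..}"
    then have "V (x - \<tau>0) = thx" using V_big by simp
    moreover have "R k \<le> \<phi> k * thx"
    proof -
      have "R k = \<phi> k * th k" using phipos[OF k] by (simp add: th_def)
      also have "\<dots> \<le> \<phi> k * thx" using th_le[OF k] phipos[OF k] by (intro mult_left_mono) auto
      finally show ?thesis .
    qed
    moreover have "x > \<tau>0" using x Ut_nonneg by simp
    ultimately show "S k \<tau>0 + R k = Sp k x" by (simp add: Sp_def)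
  qed simp
  then show ?thesis using r0 by simp
next
  case False
  let ?u = "s - \<tau>0"
  have u: "0 < ?u" "?u < Ut" using False n1 s by auto
  have Uv: "U (V ?u) = ?u" using UV[of ?u] u by simp
  have vn: "V ?u \<notin> th ` {..<K}" using Uv n2 by (metis imageE lessThan_iff)
  have vk: "V ?u \<noteq> th k" using vn k by auto
  show ?thesis
  proof (cases "V ?u < th k")
    case True
    let ?P = "{j\<in>{..<K}. V ?u < th j}"
    have dv: "((\<lambda>x. V (x - \<tau>0)) has_field_derivative C / (\<Sum>j\<in>?P. \<phi> j)) (at s)"
    proof -
      have dg: "((\<lambda>x. x - \<tau>0) has_field_derivative 1) (at s)" by (auto intro!: derivative_eq_intros)
      have "((\<lambda>x. V (x - \<tau>0)) has_field_derivative C / (\<Sum>j\<in>?P. \<phi> j) * 1) (at s)"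
        by (rule DERIV_chain2[where f=V and g="\<lambda>x. x - \<tau>0", OF _ dg]) (use dV[OF u vn] in simp)
      then show ?thesis by simp
    qed
    have d: "((\<lambda>x. S k \<tau>0 + \<phi> k * V (x - \<tau>0)) has_field_derivative \<phi> k * (C / (\<Sum>j\<in>?P. \<phi> j))) (at s)"
      by (auto intro!: derivative_eq_intros dv)
    have o: "open ({\<tau>0<..} \<inter> {x. V (x - \<tau>0) < th k})"
      by (intro open_Int open_greaterThan open_Collect_less Vs_cont continuous_intros)
    have "(Sp k has_field_derivative \<phi> k * (C / (\<Sum>j\<in>?P. \<phi> j))) (at s)"
    proof (rule has_field_derivative_transform_within_open[OF d o])
      show "s \<in> {\<tau>0<..} \<inter> {x. V (x - \<tau>0) < th k}" using s True by simp
      fix x assume x: "x \<in> {\<tau>0<..} \<inter> {x. V (x - \<tau>0) < th k}"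
      then have "\<phi> k * V (x - \<tau>0) < R k" using phiv_lt[OF k] by simp
      then show "S k \<tau>0 + \<phi> k * V (x - \<tau>0) = Sp k x" using x by (simp add: Sp_def)
    qed
    moreover have "rtp k s = \<phi> k * (C / (\<Sum>j\<in>?P. \<phi> j))"
      using BLp_after[OF s] True k by (simp add: gps_rate_def)
    ultimately show ?thesis by simp
  next
    case False
    then have gt: "th k < V ?u" using vk by simp
    have d: "((\<lambda>x. S k \<tau>0 + R k) has_field_derivative 0) (at s)"
      by (auto intro!: derivative_eq_intros)
    have o: "open ({\<tau>0<..} \<inter> {x. th k < V (x - \<tau>0)})"
      by (intro open_Int open_greaterThan open_Collect_less Vs_cont continuous_intros)
    have "(Sp k has_field_derivative 0) (at s)"
    proof (rule has_field_derivative_transform_within_open[OF d o])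
      show "s \<in> {\<tau>0<..} \<inter> {x. th k < V (x - \<tau>0)}" using s gt by simp
      fix x assume x: "x \<in> {\<tau>0<..} \<inter> {x. th k < V (x - \<tau>0)}"
      then have "R k \<le> \<phi> k * V (x - \<tau>0)" using phiv_lt[OF k, of "V (x - \<tau>0)"] by auto
      then show "S k \<tau>0 + R k = Sp k x" using x by (simp add: Sp_def)
    qed
    moreover have "rtp k s = 0"
      using BLp_after[OF s] False by (simp add: gps_rate_def)
    ultimately show ?thesis by simp
  qed
qed

end


context gptr begin

lemma int_before: assumes k: "k < K" and t: "0 \<le> t" "t \<le> \<tau>0"
  shows "(rtp k has_integral Sp k t) {0..t}"
proof -
  have "(rtp k has_integral S k t) {0..t}"
    by (rule has_integral_eq[OF _ hasint[OF k t(1)]]) (use rtp_before t in auto)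
  then show ?thesis using t by (simp add: Sp_def)
qed

lemma Sp_cont: assumes k: "k < K" shows "continuous_on {\<tau>0..t} (Sp k)"
proof -
  let ?g = "\<lambda>x. S k \<tau>0 + min (R k) (\<phi> k * V (x - \<tau>0))"
  have "continuous_on UNIV ?g"
    by (intro continuous_intros Vs_cont)
  then have c: "continuous_on {\<tau>0..t} ?g" by (rule continuous_on_subset) auto
  show ?thesis
  proof (rule continuous_on_cong[THEN iffD1, OF refl _ c])
    fix x assume x: "x \<in> {\<tau>0..t}"
    show "?g x = Sp k x"
    proof (cases "x = \<tau>0")
      case True then show ?thesis using V0 R_nonneg[OF k] by (simp add: Sp_def)
    next
      case False then show ?thesis using x by (simp add: Sp_def)
    qed
  qed
qed

lemma int_after: assumes k: "k < K" and t: "\<tau>0 < t"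
  shows "(rtp k has_integral (Sp k t - Sp k \<tau>0)) {\<tau>0..t}"
proof (rule fundamental_theorem_of_calculus_interior_strong
    [where S="insert (\<tau>0 + Ut) ((\<lambda>j. \<tau>0 + U (th j)) ` {..<K})"])
  show "finite (insert (\<tau>0 + Ut) ((\<lambda>j. \<tau>0 + U (th j)) ` {..<K}))" by simp
  show "\<tau>0 \<le> t" using t by simp
  show "continuous_on {\<tau>0..t} (Sp k)" by (rule Sp_cont[OF k])
  fix x assume x: "x \<in> {\<tau>0<..<t} - insert (\<tau>0 + Ut) ((\<lambda>j. \<tau>0 + U (th j)) ` {..<K})"
  have "(Sp k has_field_derivative rtp k x) (at x)"
  proof (rule deriv_Sp[OF k])
    show "\<tau>0 < x" using x by simp
    show "x - \<tau>0 \<noteq> Ut" using x by auto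
    fix j assume j: "j < K"
    show "x - \<tau>0 \<noteq> U (th j)"
    proof
      assume "x - \<tau>0 = U (th j)"
      then have "x = \<tau>0 + U (th j)" by simp
      then show False using x j by auto
    qed
  qed
  then show "(Sp k has_vector_derivative rtp k x) (at x)"
    by (simp add: has_real_derivative_iff_has_vector_derivative)
qed

lemma gps_Sp: "is_gps K N r \<phi> L At Sp"
  unfolding is_gps_def
proof (intro allI impI)
  fix k :: nat and t :: real assume k: "k < K" and t: "0 \<le> t"
  show "(rtp k has_integral Sp k t) {0..t}"
  proof (cases "t \<le> \<tau>0")
    case True then show ?thesis using int_before k t by simp
  next
    case False
    have "(rtp k has_integral (Sp k \<tau>0 + (Sp k t - Sp k \<tau>0))) {0..t}"
      by (rule has_integral_combine[OF tau0 _ int_before[OF k tau0 order_refl] int_after[OF k]])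
         (use False in auto)
    then show ?thesis by simp
  qed
qed

lemma Sp_before: "s \<le> \<tau>0 \<Longrightarrow> Sp k s = S k s" by (simp add: Sp_def)

lemma GF1:
  assumes k: "k < K" and i: "i < A k \<tau>0" and w: "real (Suc i) * L - S k \<tau>0 > 0"
  shows "gps_finish L Sp k i = \<tau>0 + U ((real (Suc i) * L - S k \<tau>0) / \<phi> k)"
proof -
  define w where "w = real (Suc i) * L - S k \<tau>0"
  define v where "v = w / \<phi> k"
  have wR: "w \<le> R k"
  proof -
    have "real (Suc i) \<le> real (A k \<tau>0)" using i by simp
    then have "real (Suc i) * L \<le> L * real (A k \<tau>0)" using Lpos by (simp add: mult.commute)
    then show ?thesis by (simp add: w_def R_def)
  qed
  have vpos: "v > 0" using w phipos[OF k] by (simp add: v_def w_def)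
  have vth: "v \<le> th k" using wR phipos[OF k] by (simp add: v_def th_def divide_right_mono)
  have vin: "v \<in> {0..thx}" using vpos vth th_le[OF k] by auto
  have Upos: "U v > 0" using U_strict[of 0 v] vin vpos U0 by auto
  have Ule: "U v \<le> Ut" using U_mono vin Ut_def by auto
  have "{t. 0 \<le> t \<and> real (Suc i) * L \<le> Sp k t} = {\<tau>0 + U v..}"
  proof (intro set_eqI iffI)
    fix t assume "t \<in> {t. 0 \<le> t \<and> real (Suc i) * L \<le> Sp k t}"
    then have t: "0 \<le> t" "real (Suc i) * L \<le> Sp k t" by auto
    show "t \<in> {\<tau>0 + U v..}"
    proof (cases "t \<le> \<tau>0")
      case True
      then have "Sp k t \<le> S k \<tau>0" using S_mono[OF k t(1) True] by (simp add: Sp_def)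
      then show ?thesis using t w by simp
    next
      case False
      then have "real (Suc i) * L \<le> S k \<tau>0 + min (R k) (\<phi> k * V (t - \<tau>0))"
        using t by (simp add: Sp_def)
      then have "w \<le> \<phi> k * V (t - \<tau>0)"
        unfolding w_def using min.cobounded2[of "R k" "\<phi> k * V (t - \<tau>0)"] by linarith
      then have "v \<le> V (t - \<tau>0)" using phipos[OF k] by (simp add: v_def pos_divide_le_eq mult.commute)
      then have "U v \<le> min (max (t - \<tau>0) 0) Ut" using V_ge[OF vin] by simp
      then show ?thesis using False by simp
    qed
  next
    fix t assume "t \<in> {\<tau>0 + U v..}"
    then have t: "\<tau>0 + U v \<le> t" by simp
    then have tt: "t > \<tau>0" using Upos by simp
    have "U v \<le> min (max (t - \<tau>0) 0) Ut" using t Ule tt by simp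
    then have "v \<le> V (t - \<tau>0)" using V_ge[OF vin] by simp
    then have "w \<le> \<phi> k * V (t - \<tau>0)" using phipos[OF k] by (simp add: v_def pos_divide_le_eq mult.commute)
    then have "w \<le> min (R k) (\<phi> k * V (t - \<tau>0))" using wR by simp
    then have "real (Suc i) * L \<le> S k \<tau>0 + min (R k) (\<phi> k * V (t - \<tau>0))"
      unfolding w_def by linarith
    then show "t \<in> {t. 0 \<le> t \<and> real (Suc i) * L \<le> Sp k t}"
      using tt tau0 by (simp add: Sp_def)
  qed
  then show ?thesis by (simp add: gps_finish_def v_def w_def)
qed

lemma GF_lower: assumes "0 \<le> T" "real (Suc i) * L \<le> Sp k T"
  shows "gps_finish L Sp k i \<le> T"
  unfolding gps_finish_def by (rule cInf_lower) (use assms in \<open>auto intro: bdd_belowI[of _ 0]\<close>)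

lemma GF2: assumes "real (Suc i) * L \<le> S k \<tau>0" shows "gps_finish L Sp k i \<le> \<tau>0"
  by (rule GF_lower) (use assms tau0 in \<open>auto simp: Sp_def\<close>)

lemma GF_le:
  assumes k: "k < K" and T: "0 \<le> T" "T < \<tau>0" and F: "gps_finish L Sp k i \<le> T"
    and d: "real (Suc i) * L \<le> S k \<tau>0"
  shows "real (Suc i) * L \<le> S k T"
proof (rule ccontr)
  assume "\<not> ?thesis"
  then have lt: "S k T < real (Suc i) * L" by simp
  have "continuous_on {0..\<tau>0} (S k)" by (rule S_cont[OF k tau0])
  then obtain \<delta> where \<delta>: "\<delta> > 0"
    "\<And>y. y \<in> {0..\<tau>0} \<Longrightarrow> dist y T < \<delta> \<Longrightarrow> dist (S k y) (S k T) < real (Suc i) * L - S k T"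
    using T lt unfolding continuous_on_iff by (metis atLeastAtMost_iff diff_gt_0_iff_gt less_eq_real_def)
  define m where "m = min (T + \<delta>/2) \<tau>0"
  have mT: "T < m" using \<delta> T by (simp add: m_def)
  have lower: "m \<le> y" if "y \<in> {t. 0 \<le> t \<and> real (Suc i) * L \<le> Sp k t}" for y
  proof (rule ccontr)
    assume "\<not> m \<le> y"
    then have ym: "y < m" by simp
    have y0: "0 \<le> y" "real (Suc i) * L \<le> Sp k y" using that by auto
    have ytau: "y \<le> \<tau>0" using ym by (simp add: m_def)
    then have "real (Suc i) * L \<le> S k y" using y0 by (simp add: Sp_def)
    show False
    proof (cases "y \<le> T")
      case True
      then show False using S_mono[OF k y0(1) True] lt \<open>real (Suc i) * L \<le> S k y\<close> by simp
    next
      case False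
      then have "dist y T < \<delta>" using ym by (simp add: m_def dist_real_def)
      then have "dist (S k y) (S k T) < real (Suc i) * L - S k T" using \<delta>(2) y0 ytau by simp
      then show False using \<open>real (Suc i) * L \<le> S k y\<close> by (simp add: dist_real_def)
    qed
  qed
  have ne: "\<tau>0 \<in> {t. 0 \<le> t \<and> real (Suc i) * L \<le> Sp k t}" using tau0 d by (simp add: Sp_def)
  have "m \<le> gps_finish L Sp k i"
    unfolding gps_finish_def by (rule cInf_greatest) (use ne lower in auto)
  then show False using F mT by simp
qed

lemma ordering:
  assumes kq: "kq < K" and kx: "kx < K" and iq: "iq < A kq \<tau>0" and ix: "ix < A kx \<tau>0"
    and F: "gps_finish L Sp kq iq \<le> gps_finish L Sp kx ix"
    and T: "0 \<le> T" and dx: "real (Suc ix) * L \<le> S kx T"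
  shows "real (Suc iq) * L \<le> S kq T"
proof (cases "real (Suc iq) * L - S kq \<tau>0 > 0")
  case False
  then have dq: "real (Suc iq) * L \<le> S kq \<tau>0" by simp
  show ?thesis
  proof (cases "\<tau>0 \<le> T")
    case True then show ?thesis using S_mono[OF kq tau0 True] dq by simp
  next
    case False
    have "gps_finish L Sp kx ix \<le> T"
      by (rule GF_lower) (use T dx False in \<open>auto simp: Sp_def\<close>)
    then show ?thesis using GF_le[OF kq T _ _ dq] F False by simp
  qed
next
  case wq: True
  show ?thesis
  proof (cases "real (Suc ix) * L - S kx \<tau>0 > 0")
    case False
    then have "gps_finish L Sp kx ix \<le> \<tau>0" using GF2 by simp
    moreover have "gps_finish L Sp kq iq > \<tau>0"
    proof -
      have "real (Suc iq) \<le> real (A kq \<tau>0)" using iq by simp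
      then have "real (Suc iq) * L \<le> L * real (A kq \<tau>0)" using Lpos by (simp add: mult.commute)
      then have "(real (Suc iq) * L - S kq \<tau>0) / \<phi> kq \<le> th kq"
        using phipos[OF kq] by (simp add: th_def R_def divide_right_mono)
      then have "U ((real (Suc iq) * L - S kq \<tau>0) / \<phi> kq) > U 0"
        using U_strict[of 0] th_le[OF kq] wq phipos[OF kq] by simp
      then show ?thesis using GF1[OF kq iq wq] U0 by simp
    qed
    ultimately show ?thesis using F by simp
  next
    case wx: True
    define vq where "vq = (real (Suc iq) * L - S kq \<tau>0) / \<phi> kq"
    define vx where "vx = (real (Suc ix) * L - S kx \<tau>0) / \<phi> kx"
    have vq_in: "vq \<in> {0..thx}"
    proof -
      have "real (Suc iq) \<le> real (A kq \<tau>0)" using iq by simp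
      then have "real (Suc iq) * L \<le> L * real (A kq \<tau>0)" using Lpos by (simp add: mult.commute)
      then have "vq \<le> th kq" using phipos[OF kq] by (simp add: vq_def th_def R_def divide_right_mono)
      then show ?thesis using th_le[OF kq] wq phipos[OF kq] by (simp add: vq_def)
    qed
    have vx_in: "vx \<in> {0..thx}"
    proof -
      have "real (Suc ix) \<le> real (A kx \<tau>0)" using ix by simp
      then have "real (Suc ix) * L \<le> L * real (A kx \<tau>0)" using Lpos by (simp add: mult.commute)
      then have "vx \<le> th kx" using phipos[OF kx] by (simp add: vx_def th_def R_def divide_right_mono)
      then show ?thesis using th_le[OF kx] wx phipos[OF kx] by (simp add: vx_def)
    qed
    have "U vq \<le> U vx" using F GF1[OF kq iq wq] GF1[OF kx ix wx] by (simp add: vq_def vx_def)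
    then have vle: "vq \<le> vx" using U_strict[of vx vq] vq_in vx_in by force
    have Tt: "\<tau>0 < T"
    proof (rule ccontr)
      assume "\<not> \<tau>0 < T"
      then have "S kx T \<le> S kx \<tau>0" using S_mono[OF kx T] by simp
      then show False using dx wx by simp
    qed
    show ?thesis
    proof (rule ccontr)
      assume "\<not> ?thesis"
      then have nq: "S kq T < real (Suc iq) * L" by simp
      have "(S kx T - S kx \<tau>0) / \<phi> kx \<le> (S kq T - S kq \<tau>0) / \<phi> kq"
      proof (rule fair[OF kq kx tau0])
        show "\<tau>0 \<le> T" using Tt by simp
        fix y assume y: "y \<in> {\<tau>0..T}"
        have "S kq y \<le> S kq T" using S_mono[OF kq _ ] y tau0 by auto
        moreover have "real (Suc iq) * L \<le> L * real (A kq \<tau>0)"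
          using iq Lpos by (simp add: mult.commute)
        moreover have "A kq \<tau>0 \<le> A kq y" using monoA[OF kq] y by (auto dest: monoD)
        then have "L * real (A kq \<tau>0) \<le> L * real (A kq y)" using Lpos by simp
        ultimately show "kq \<in> BL y" using nq kq by (simp add: gps_backlogged_def)
      qed
      moreover have "vx \<le> (S kx T - S kx \<tau>0) / \<phi> kx"
        using dx phipos[OF kx] by (simp add: vx_def divide_right_mono)
      ultimately have "vq \<le> (S kq T - S kq \<tau>0) / \<phi> kq" using vle by simp
      then have "real (Suc iq) * L - S kq \<tau>0 \<le> S kq T - S kq \<tau>0"
        using phipos[OF kq] by (simp add: vq_def divide_le_cancel)
      then show False using nq by simp
    qed
  qed
qed

end


locale mpsys = gpsys +
  fixes M :: nat and \<tau> :: "nat \<Rightarrow> real" and b :: "nat \<Rightarrow> nat \<Rightarrow> nat"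
  assumes M1: "M \<ge> 1" and mp: "is_mpgps K N r \<phi> L M A \<tau> b"
begin

abbreviation "sb \<equiv> served_before b"
abbreviation "e \<equiv> batch_end K N r L \<tau> b"
definition "sz h = (\<Sum>k<K. b h k)"

lemma tau0: "\<tau> 0 = 0" using mp by (simp add: is_mpgps_def)
lemma tau_lim: "filterlim \<tau> at_top sequentially" using mp by (simp add: is_mpgps_def)
lemma mpA: "k < K \<Longrightarrow> sb h k \<le> A k (\<tau> h) \<and> b h k \<le> A k (\<tau> h) - sb h k"
  using mp by (simp add: is_mpgps_def)
lemma mpSz: "sz h = min M (\<Sum>k<K. A k (\<tau> h) - sb h k)"
  using mp by (simp add: is_mpgps_def sz_def)
lemma szM: "sz h \<le> M" using mpSz by simp
lemma mpE: "e h \<le> \<tau> (Suc h)" using mp by (simp add: is_mpgps_def)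
lemma mpIdle: "e h \<le> s \<Longrightarrow> s < \<tau> (Suc h) \<Longrightarrow> k < K \<Longrightarrow> A k s \<le> sb (Suc h) k"
  using mp unfolding is_mpgps_def by blast
lemma mpSel: "is_gps K N r \<phi> L (truncate_arrivals A (\<tau> h)) S' \<Longrightarrow> k < K \<Longrightarrow> k' < K \<Longrightarrow>
   sb h k \<le> j \<Longrightarrow> j < sb h k + b h k \<Longrightarrow> sb h k' + b h k' \<le> j' \<Longrightarrow> j' < A k' (\<tau> h) \<Longrightarrow>
   gps_finish L S' k j \<le> gps_finish L S' k' j'"
  using mp unfolding is_mpgps_def by blast

lemma e_eq: "C * (e h - \<tau> h) = real (sz h) * L"
  using N1 rpos by (simp add: batch_end_def sz_def)

lemma e_ge: "\<tau> h \<le> e h"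
proof -
  have "real (\<Sum>k<K. b h k) * L / C \<ge> 0"
    using Cpos Lpos by (simp add: sum_nonneg)
  then show ?thesis by (simp add: batch_end_def)
qed

lemma tau_Suc: "\<tau> h \<le> \<tau> (Suc h)" using e_ge mpE order_trans by blast

lemma tau_mono: "h \<le> h' \<Longrightarrow> \<tau> h \<le> \<tau> h'"
  using tau_Suc by (rule lift_Suc_mono_le)

lemma tau_nonneg: "\<tau> h \<ge> 0" using tau_mono[of 0 h] tau0 by simp

lemma e_mono: assumes "h \<le> h'" shows "e h \<le> e h'"
proof (cases "h = h'")
  case False
  then have "Suc h \<le> h'" using assms by simp
  then have "e h \<le> \<tau> h'" using mpE tau_mono order_trans by blast
  then show ?thesis using e_ge order_trans by blast
qed simp

lemma sb_Suc: "sb (Suc h) k = sb h k + b h k"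
  by (simp add: served_before_def)

lemma sb_add: "h \<le> h' \<Longrightarrow> sb h' k = sb h k + (\<Sum>i\<in>{h..<h'}. b i k)"
proof (induction h' rule: dec_induct)
  case (step n) then show ?case by (simp add: sb_Suc)
qed simp

lemma sb_mono: "h \<le> h' \<Longrightarrow> sb h k \<le> sb h' k" using sb_add by simp

lemma sb_total: assumes "h \<le> h'"
  shows "(\<Sum>k<K. sb h' k - sb h k) = (\<Sum>i\<in>{h..<h'}. sz i)"
proof -
  have "(\<Sum>k<K. sb h' k - sb h k) = (\<Sum>k<K. \<Sum>i\<in>{h..<h'}. b i k)"
    using sb_add[OF assms] by simp
  also have "\<dots> = (\<Sum>i\<in>{h..<h'}. sz i)" unfolding sz_def by (rule sum.swap)
  finally show ?thesis .
qed

lemma idx: assumes "c \<le> H" "sb c k \<le> ix" "ix < sb H k"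
  shows "\<exists>i. c \<le> i \<and> i < H \<and> sb i k \<le> ix \<and> ix < sb (Suc i) k"
  using assms
proof (induction H rule: dec_induct)
  case base then show ?case by simp
next
  case (step n)
  show ?case
  proof (cases "ix < sb n k")
    case True then show ?thesis using step by force
  next
    case False then show ?thesis using step by (intro exI[of _ n]) auto
  qed
qed

lemma contig: assumes "c \<le> H" "\<And>i. c \<le> i \<Longrightarrow> i < H \<Longrightarrow> e i = \<tau> (Suc i)"
  shows "C * (\<tau> H - \<tau> c) = real (\<Sum>i\<in>{c..<H}. sz i) * L"
  using assms
proof (induction H rule: dec_induct)
  case base then show ?case by simp
next
  case (step n)
  have en: "e n = \<tau> (Suc n)" using step.prems[of n] step.hyps by simp
  have ih: "C * (\<tau> n - \<tau> c) = real (\<Sum>i\<in>{c..<n}. sz i) * L"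
    using step.IH step.prems step.hyps by simp
  have en2: "C * (e n - \<tau> n) = real (sz n) * L" by (rule e_eq)
  have "C * (\<tau> (Suc n) - \<tau> c) = C * (\<tau> n - \<tau> c) + C * (e n - \<tau> n)"
    unfolding en by (simp add: algebra_simps)
  also have "\<dots> = real (\<Sum>i\<in>{c..<n}. sz i) * L + real (sz n) * L"
    using ih en2 by linarith
  also have "\<dots> = real (\<Sum>i\<in>{c..<Suc n}. sz i) * L"
    using step.hyps by (simp add: algebra_simps)
  finally show ?case .
qed

end


context mpsys begin

lemma main_bound:
  assumes k: "k < K" and t: "0 \<le> t" and Hb: "\<And>h. h < H \<Longrightarrow> e h \<le> t" and Ht: "t < e H"
  shows "S k t < real (sb H k + 2*M) * L"
proof (rule ccontr)
  assume neg: "\<not> ?thesis"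
  define j where "j = sb H k"
  have St: "real (j + 2*M) * L \<le> S k t" using neg j_def by simp
  have SLA: "S k t \<le> L * real (A k t)" by (rule S_le_LA[OF k t])
  have tauH: "\<tau> H \<le> t"
  proof (rule ccontr)
    assume nt: "\<not> \<tau> H \<le> t"
    have "H \<noteq> 0"
    proof
      assume "H = 0" then show False using tau0 t nt by simp
    qed
    then obtain h' where H: "H = Suc h'" by (cases H) auto
    have "e h' \<le> t" using Hb H by simp
    then have "A k t \<le> sb H k" using mpIdle[of h' t k] H k nt by simp
    then have "L * real (A k t) \<le> L * real j" using Lpos j_def by simp
    moreover have "real j * L < real (j + 2*M) * L" using M1 Lpos by simp
    ultimately show False using St SLA by (simp add: mult.commute)
  qed
  have "real (Suc j) * L \<le> real (j + 2*M) * L" using M1 Lpos by (intro mult_right_mono) auto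
  then have yle: "real (Suc j) * L \<le> S k t" using St by simp
  obtain T where T: "0 \<le> T" "T \<le> t" "S k T = real (Suc j) * L"
    using IVT'[of "S k" 0 "real (Suc j) * L" t] S0[OF k] yle S_cont[OF k t] t Lpos by auto
  have Tt: "S k t - S k T \<le> C * (t - T)" by (rule S_work1[OF k T(1,2)])
  define dn where "dn k' ix \<longleftrightarrow> real (Suc ix) * L \<le> S k' T" for k' ix
  define good where "good i \<longleftrightarrow> e i = \<tau> (Suc i) \<and>
      (\<forall>k'<K. \<forall>ix. sb i k' \<le> ix \<and> ix < sb (Suc i) k' \<longrightarrow> dn k' ix)" for i
  define c where "c = (LEAST c. c \<le> H \<and> (\<forall>i. c \<le> i \<and> i < H \<longrightarrow> good i))"
  have c: "c \<le> H \<and> (\<forall>i. c \<le> i \<and> i < H \<longrightarrow> good i)"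
    unfolding c_def by (rule LeastI[of _ H]) auto
  have cmin: "\<not> good (c - 1)" if "c > 0"
  proof
    assume "good (c - 1)"
    then have "c - 1 \<le> H \<and> (\<forall>i. c - 1 \<le> i \<and> i < H \<longrightarrow> good i)"
      using c that by (metis Suc_pred' diff_le_self le_trans not_less_eq_eq order_antisym_conv)
    then have "c \<le> c - 1" unfolding c_def by (rule Least_le)
    then show False using that by simp
  qed
  define hi where "hi k' = (if k' = k then Suc j else sb H k')" for k'
  define X where "X = (\<Sum>i\<in>{c..<H}. sz i)"
  have sbcH: "sb c k' \<le> sb H k'" for k' using sb_mono c by simp
  have hi_ge: "sb c k' \<le> hi k'" for k' using sbcH[of k'] sbcH[of k] j_def by (simp add: hi_def)
  have cnt: "(\<Sum>k'<K. hi k' - sb c k') = X + 1"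
  proof -
    have "(\<Sum>k'<K. hi k' - sb c k') = (\<Sum>k'<K. (sb H k' - sb c k') + (if k' = k then 1 else 0))"
    proof (rule sum.cong[OF refl])
      fix k' show "hi k' - sb c k' = sb H k' - sb c k' + (if k' = k then 1 else 0)"
        using sbcH[of k'] j_def by (simp add: hi_def)
    qed
    also have "\<dots> = (\<Sum>k'<K. sb H k' - sb c k') + 1"
      using k by (simp add: sum.distrib)
    also have "\<dots> = X + 1" using sb_total c by (simp add: X_def)
    finally show ?thesis .
  qed
  have dnP: "dn k' ix" if k': "k' < K" and ix: "sb c k' \<le> ix" "ix < hi k'" for k' ix
  proof (cases "k' = k \<and> ix = j")
    case True then show ?thesis using T by (simp add: dn_def)
  next
    case False
    then have "ix < sb H k'" using ix j_def by (auto simp: hi_def split: if_splits)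
    then obtain i where i: "c \<le> i" "i < H" "sb i k' \<le> ix" "ix < sb (Suc i) k'"
      using idx[of c H k' ix] c ix by auto
    then show ?thesis using c k' unfolding good_def by blast
  qed
  have W: "L * real (X + 1) \<le> C * (T - T0)"
    if T0: "0 \<le> T0" and pre: "\<And>k'. k' < K \<Longrightarrow> sb c k' < hi k' \<Longrightarrow> S k' T0 \<le> L * real (sb c k')"
    for T0
  proof -
    have "sb c k < hi k" using sbcH[of k] j_def by (simp add: hi_def)
    then have Sk0: "S k T0 \<le> L * real (sb c k)" using pre[OF k] by simp
    have TT0: "T0 \<le> T"
    proof (rule ccontr)
      assume "\<not> T0 \<le> T"
      then have "S k T \<le> S k T0" using S_mono[OF k T(1)] by simp
      moreover have "L * real (sb c k) \<le> L * real j" using sbcH[of k] j_def Lpos by simp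
      ultimately show False using Sk0 T(3) Lpos by (simp add: algebra_simps)
    qed
    have per: "L * real (hi k' - sb c k') \<le> S k' T - S k' T0" if k': "k' < K" for k'
    proof (cases "sb c k' < hi k'")
      case True
      have "dn k' (hi k' - 1)" by (rule dnP[OF k']) (use True in auto)
      then have "real (hi k') * L \<le> S k' T" using True by (simp add: dn_def of_nat_diff)
      moreover have "S k' T0 \<le> L * real (sb c k')" using pre[OF k' True] .
      ultimately show ?thesis using True by (simp add: of_nat_diff algebra_simps)
    next
      case False
      then show ?thesis using S_mono[OF k' T0 TT0] by simp
    qed
    have "L * real (X + 1) = (\<Sum>k'<K. L * real (hi k' - sb c k'))"
      using cnt by (metis of_nat_sum sum_distrib_left)
    also have "\<dots> \<le> (\<Sum>k'<K. S k' T - S k' T0)" by (rule sum_mono) (use per in auto)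
    also have "\<dots> \<le> C * (T - T0)" by (rule S_work[OF T0 TT0])
    finally show ?thesis .
  qed
  have eH: "C * (e H - \<tau> c) = real X * L + real (sz H) * L"
  proof -
    have "C * (\<tau> H - \<tau> c) = real X * L"
      unfolding X_def by (rule contig) (use c good_def in auto)
    then show ?thesis using e_eq[of H] by (simp add: algebra_simps)
  qed
  have szH: "real (sz H) * L \<le> real M * L" using szM Lpos by simp
  have ar: "C * T + 2 * (real M * L) - L \<le> C * t" "L \<le> real M * L"
  proof -
    have f3: "S k t - S k T \<le> C * t - C * T" using Tt by (simp add: algebra_simps)
    have f4: "real (j + 2*M) * L = real j * L + 2 * (real M * L)" by (simp add: algebra_simps)
    have f5: "real (Suc j) * L = real j * L + L" by (simp add: algebra_simps)
    show "L \<le> real M * L" using M1 Lpos by simp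
    have g1: "S k T = real j * L + L" using T(3) f5 by simp
    have g2: "real j * L + 2 * (real M * L) \<le> S k t" using St f4 by simp
    show "C * T + 2 * (real M * L) - L \<le> C * t" using f3 g1 g2 by linarith
  qed
  have key: "C * e H \<le> C * t"
  proof (cases "c = 0")
    case True
    have W0: "L * real (X + 1) \<le> C * (T - 0)"
      by (rule W) (use S0 Lpos in auto)
    have f1: "real X * L + L \<le> C * T" using W0 by (simp add: algebra_simps)
    have f2: "C * e H = real X * L + real (sz H) * L" using eH True tau0 by (simp add: algebra_simps)
    show ?thesis using f1 f2 ar szH Lpos by linarith
  next
    case cpos: False
    then have cS: "Suc (c - 1) = c" by simp
    show ?thesis
    proof (cases "e (c - 1) = \<tau> c")
      case False
      then have gap: "e (c - 1) < \<tau> c" using mpE[of "c - 1"] cS by simp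
      have W': "L * real (X + 1) \<le> C * (T - \<tau> c)"
      proof (rule ccontr)
        assume nW: "\<not> L * real (X + 1) \<le> C * (T - \<tau> c)"
        define d where "d = (L * real (X + 1) - C * (T - \<tau> c)) / (2 * C)"
        have dpos: "d > 0" using nW Cpos by (simp add: d_def)
        define s where "s = max (e (c - 1)) (\<tau> c - d)"
        have s0: "0 \<le> s" using tau_nonneg[of "c - 1"] e_ge[of "c - 1"] by (simp add: s_def)
        have slt: "s < \<tau> c" using gap dpos by (simp add: s_def)
        have "L * real (X + 1) \<le> C * (T - s)"
        proof (rule W[OF s0])
          fix k' assume k': "k' < K"
          have "A k' s \<le> sb c k'" using mpIdle[of "c - 1" s k'] cS slt k' by (simp add: s_def)
          then have "L * real (A k' s) \<le> L * real (sb c k')" using Lpos by simp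
          then show "S k' s \<le> L * real (sb c k')" using S_le_LA[OF k' s0] by simp
        qed
        moreover have "C * (T - s) \<le> C * (T - (\<tau> c - d))"
          using Cpos by (intro mult_left_mono) (auto simp: s_def)
        moreover have "C * d * 2 = L * real (X + 1) - C * (T - \<tau> c)"
          using N1 rpos by (simp add: d_def)
        ultimately show False using dpos Cpos nW by (simp add: algebra_simps)
      qed
      have f1: "real X * L + L \<le> C * T - C * \<tau> c" using W' by (simp add: algebra_simps)
      have f2: "C * e H = C * \<tau> c + real X * L + real (sz H) * L" using eH by (simp add: algebra_simps)
      show ?thesis using f1 f2 ar szH Lpos by linarith
    next
      case True
      have ng: "\<not> good (c - 1)" using cmin cpos by simp
      then obtain k'' iq where q: "k'' < K" "sb (c - 1) k'' \<le> iq" "iq < sb c k''" "\<not> dn k'' iq"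
        using True cS unfolding good_def by auto
      interpret g: gptr K N r L \<phi> A S "\<tau> (c - 1)"
        by (intro gptr.intro gpsys_axioms gptr_axioms.intro tau_nonneg)
      have W': "L * real (X + 1) \<le> C * (T - \<tau> (c - 1))"
      proof (rule W[OF tau_nonneg])
        fix k' assume k': "k' < K" and hk: "sb c k' < hi k'"
        show "S k' (\<tau> (c - 1)) \<le> L * real (sb c k')"
        proof (cases "A k' (\<tau> (c - 1)) \<le> sb c k'")
          case True
          then have "L * real (A k' (\<tau> (c - 1))) \<le> L * real (sb c k')" using Lpos by simp
          then show ?thesis using S_le_LA[OF k' tau_nonneg[of "c - 1"]] by linarith
        next
          case False
          have sbc: "sb c k' = sb (c - 1) k' + b (c - 1) k'" using sb_Suc[of "c - 1" k'] cS by simp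
          have sbc'': "sb c k'' = sb (c - 1) k'' + b (c - 1) k''" using sb_Suc[of "c - 1" k''] cS by simp
          have F: "gps_finish L g.Sp k'' iq \<le> gps_finish L g.Sp k' (sb c k')"
            by (rule mpSel[OF g.gps_Sp q(1) k' q(2)]) (use q(3) sbc sbc'' False in auto)
          have iqA: "iq < A k'' (\<tau> (c - 1))" using q(3) sbc'' mpA[OF q(1), of "c - 1"] by linarith
          have ixA: "sb c k' < A k' (\<tau> (c - 1))" using False by simp
          have "dn k' (sb c k')" by (rule dnP[OF k' order_refl hk])
          then have "dn k'' iq"
            using g.ordering[OF q(1) k' iqA ixA F T(1)] by (simp add: dn_def)
          then show ?thesis using q(4) by simp
        qed
      qed
      have tc: "C * (\<tau> c - \<tau> (c - 1)) = real (sz (c - 1)) * L"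
        using e_eq[of "c - 1"] True by simp
      have szc: "real (sz (c - 1)) * L \<le> real M * L" using szM Lpos by simp
      have f1: "real X * L + L \<le> C * T - C * \<tau> (c - 1)" using W' by (simp add: algebra_simps)
      have f2: "C * e H = C * \<tau> c + real X * L + real (sz H) * L" using eH by (simp add: algebra_simps)
      have f3: "C * \<tau> c = C * \<tau> (c - 1) + real (sz (c - 1)) * L" using tc by (simp add: algebra_simps)
      show ?thesis using f1 f2 f3 ar szH szc Lpos by linarith
    qed
  qed
  then have "e H \<le> t" using Cpos mult_le_cancel_left_pos by blast
  then show False using Ht by simp
qed

end


theorem corollary1:
  fixes K N M :: nat and r L :: real and \<phi> :: "nat \<Rightarrow> real"
    and A :: "nat \<Rightarrow> real \<Rightarrow> nat" and S :: "nat \<Rightarrow> real \<Rightarrow> real"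
    and \<tau> :: "nat \<Rightarrow> real" and b :: "nat \<Rightarrow> nat \<Rightarrow> nat"
    and k :: nat and t :: real
  assumes "N \<ge> 1" and "r > 0" and "L > 0" and "M \<ge> 1"
    and "\<forall>j<K. \<phi> j > 0"
    and "valid_arrivals K A"
    and "is_gps K N r \<phi> L A S"
    and "is_mpgps K N r \<phi> L M A \<tau> b"
    and "k < K" and "t \<ge> 0"
  shows "mpgps_queue K N r L A \<tau> b k t - gps_queue L A S k t \<le> 2 * int M - 1"
proof -
  interpret m: mpsys K N r L \<phi> A S M \<tau> b
    by (intro mpsys.intro gpsys.intro mpsys_axioms.intro) (use assms in \<open>auto simp: valid_arrivals_def\<close>)
  let ?e = "batch_end K N r L \<tau> b"
  have "\<forall>\<^sub>F h in sequentially. t < \<tau> h"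
    using m.tau_lim by (simp add: filterlim_at_top_dense)
  then obtain h0 where h0: "t < \<tau> h0" by (auto simp: eventually_sequentially)
  then have ex: "\<exists>h. t < ?e h" using m.e_ge[of h0] by (intro exI[of _ h0]) simp
  define H where "H = (LEAST h. t < ?e h)"
  have Ht: "t < ?e H" unfolding H_def by (rule LeastI_ex[OF ex])
  have Hb: "?e h \<le> t" if "h < H" for h
    using not_less_Least[of h "\<lambda>h. t < ?e h"] that unfolding H_def by simp
  have set: "{h. ?e h \<le> t} = {..<H}"
  proof (intro set_eqI iffI)
    fix h assume "h \<in> {h. ?e h \<le> t}"
    then have "?e h \<le> t" by simp
    then show "h \<in> {..<H}" using m.e_mono[of H h] Ht by (cases "H \<le> h") auto
  qed (use Hb in auto)
  have q1: "mpgps_queue K N r L A \<tau> b k t = int (A k t) - int (served_before b H k)"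
    unfolding mpgps_queue_def set served_before_def by simp
  have q2: "gps_queue L A S k t = int (A k t) - \<lfloor>S k t / L\<rfloor>"
    by (simp add: gps_queue_def)
  have "S k t < real (served_before b H k + 2*M) * L"
    by (rule m.main_bound) (use assms Hb Ht in auto)
  then have "S k t / L < real (served_before b H k + 2*M)"
    using assms(3) by (simp add: pos_divide_less_eq)
  then have "\<lfloor>S k t / L\<rfloor> < int (served_before b H k + 2*M)"
    by (simp add: floor_less_iff)
  then show ?thesis using q1 q2 by simp
qed


end
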